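(* For each order function $g$ there exists an order function $h$ such that every $\mathrm{DNR}_g$ function Turing-computes an $\mathrm{SNPR}_h$ function.
   Context: $\varphi_e$ denotes the $e$-th partial recursive function. A function $f:\omega\to\omega$ is DNR if $f(e)\neq\varphi_e(e)$ for every $e$ such that $\varphi_e(e)$ is defined. A function $f:\omega\to\omega$ is SNPR (strongly non-partial-recursive) if for every partial recursive function $\psi$, for all but finitely many $n$, if $\psi(n)$ is defined then $f(n)\neq\psi(n)$. An order function is a recursive, nondecreasing, unbounded function $h:\omega\to\omega$ with $h(0)\ge 2$. For a class $\mathrm{C}$ of functions and an order function $h$, $\mathrm{C}_h$ denotes the members of $\mathrm{C}$ bounded by $h$ (i.e., $f(n)<h(n)$ for all $n$). *)

theory Defs
  imports Main "HOL-Library.Nat_Bijection"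
begin

text \<open>Programs for unary partial recursive functionals (relative to an oracle),
  using Cantor pairing prod_encode / prod_decode as the coding of tuples.\<close>

datatype recf = Zero | Succ | Ident | Fst | Snd | Orc
  | Pair recf recf | Comp recf recf | Prim recf recf | Mn recf

inductive ev :: "(nat \<Rightarrow> nat) \<Rightarrow> recf \<Rightarrow> nat \<Rightarrow> nat \<Rightarrow> bool" for A where
  ev_zero: "ev A Zero x 0"
| ev_succ: "ev A Succ x (Suc x)"
| ev_ident: "ev A Ident x x"
| ev_fst: "ev A Fst x (fst (prod_decode x))"
| ev_snd: "ev A Snd x (snd (prod_decode x))"
| ev_orc: "ev A Orc x (A x)"
| ev_pair: "ev A f x y \<Longrightarrow> ev A g x z \<Longrightarrow> ev A (Pair f g) x (prod_encode (y, z))"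
| ev_comp: "ev A g x y \<Longrightarrow> ev A f y z \<Longrightarrow> ev A (Comp f g) x z"
| ev_prim0: "ev A g y z \<Longrightarrow> ev A (Prim g h) (prod_encode (0, y)) z"
| ev_primS: "ev A (Prim g h) (prod_encode (n, y)) r \<Longrightarrow>
     ev A h (prod_encode (n, prod_encode (r, y))) z \<Longrightarrow>
     ev A (Prim g h) (prod_encode (Suc n, y)) z"
| ev_mn: "ev A f (prod_encode (n, x)) 0 \<Longrightarrow>
     (\<forall>m<n. \<exists>v. v \<noteq> 0 \<and> ev A f (prod_encode (m, x)) v) \<Longrightarrow>
     ev A (Mn f) x n"

text \<open>Goedel numbering of programs (a computable bijection recf -> nat).\<close>

fun code :: "recf \<Rightarrow> nat" where
  "code Zero = 0"
| "code Succ = 1"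
| "code Ident = 2"
| "code Fst = 3"
| "code Snd = 4"
| "code Orc = 5"
| "code (Pair f g) = 6 + 4 * prod_encode (code f, code g)"
| "code (Comp f g) = 7 + 4 * prod_encode (code f, code g)"
| "code (Prim f g) = 8 + 4 * prod_encode (code f, code g)"
| "code (Mn f) = 9 + 4 * code f"

text \<open>phi e x y: the e-th partial recursive function (no oracle) on x is defined with value y.\<close>
definition phi :: "nat \<Rightarrow> nat \<Rightarrow> nat \<Rightarrow> bool" where
  "phi e x y \<longleftrightarrow> (\<exists>p. code p = e \<and> ev (\<lambda>_. 0) p x y)"

definition partial_recursive :: "(nat \<Rightarrow> nat option) \<Rightarrow> bool" where
  "partial_recursive \<psi> \<longleftrightarrow> (\<exists>e. \<forall>x y. \<psi> x = Some y \<longleftrightarrow> phi e x y)"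

definition recursive :: "(nat \<Rightarrow> nat) \<Rightarrow> bool" where
  "recursive h \<longleftrightarrow> (\<exists>e. \<forall>x. phi e x (h x))"

definition turing_computes :: "(nat \<Rightarrow> nat) \<Rightarrow> (nat \<Rightarrow> nat) \<Rightarrow> bool" where
  "turing_computes f s \<longleftrightarrow> (\<exists>p. \<forall>x. ev f p x (s x))"

definition DNR :: "(nat \<Rightarrow> nat) \<Rightarrow> bool" where
  "DNR f \<longleftrightarrow> (\<forall>e y. phi e e y \<longrightarrow> f e \<noteq> y)"

definition SNPR :: "(nat \<Rightarrow> nat) \<Rightarrow> bool" where
  "SNPR f \<longleftrightarrow> (\<forall>\<psi>. partial_recursive \<psi> \<longrightarrow> finite {n. \<psi> n = Some (f n)})"

definition order_function :: "(nat \<Rightarrow> nat) \<Rightarrow> bool" where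
  "order_function h \<longleftrightarrow> recursive h \<and> mono h \<and> (\<forall>m. \<exists>n. m < h n) \<and> h 0 \<ge> 2"

definition bounded_by :: "(nat \<Rightarrow> nat) \<Rightarrow> (nat \<Rightarrow> nat) \<Rightarrow> bool" where
  "bounded_by h f \<longleftrightarrow> (\<forall>n. f n < h n)"

end

theory Submission
  imports Defs
begin

lemma ev_cong: "ev A p x y \<Longrightarrow> y = z \<Longrightarrow> ev A p x z" by simp

lemma ev_fst': "ev A Fst (prod_encode (a, b)) a"
  using ev_fst[of A "prod_encode (a,b)"] by simp
lemma ev_snd': "ev A Snd (prod_encode (a, b)) b"
  using ev_snd[of A "prod_encode (a,b)"] by simp

fun addc :: "nat \<Rightarrow> recf \<Rightarrow> recf" where
  "addc 0 p = p"
| "addc (Suc c) p = Comp Succ (addc c p)"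

lemma ev_addc: "ev A p x v \<Longrightarrow> ev A (addc c p) x (v + c)"
proof (induction c)
  case 0 then show ?case by simp
next
  case (Suc c) then show ?case using ev_comp[OF Suc.IH[OF Suc.prems] ev_succ] by simp
qed

definition K :: "nat \<Rightarrow> recf" where "K c = addc c Zero"

lemma ev_K: "ev A (K c) x c"
  unfolding K_def by (metis ev_addc ev_zero add_0)

lemma code_K_Suc: "code (K (Suc m)) = 7 + 4 * prod_encode (1, code (K m))"
  by (simp add: K_def)
lemma code_K_0: "code (K 0) = 0" by (simp add: K_def)

definition Add :: recf where "Add = Prim Ident (Comp Succ (Comp Fst Snd))"

lemma ev_Add: "ev A Add (prod_encode (a, b)) (a + b)"
proof (induction a)
  case 0
  then show ?case unfolding Add_def by (simp add: ev_prim0 ev_ident)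
next
  case (Suc a)
  have "ev A (Comp Succ (Comp Fst Snd)) (prod_encode (a, prod_encode (a + b, b))) (Suc (a + b))"
    by (rule ev_comp[OF ev_comp[OF ev_snd' ev_fst'] ev_succ])
  from ev_primS[OF Suc[unfolded Add_def] this] show ?case unfolding Add_def by simp
qed

lemma ev_pair_comp:
  "ev A f x a \<Longrightarrow> ev A g x b \<Longrightarrow> ev A Add (prod_encode (a, b)) (a + b)" by (rule ev_Add)

definition TriH :: recf where "TriH = Comp Add (Pair (Comp Succ Fst) (Comp Fst Snd))"
definition Tri :: recf where "Tri = Comp (Prim Zero TriH) (Pair Ident Zero)"

lemma ev_TriP: "ev A (Prim Zero TriH) (prod_encode (n, y)) (triangle n)"
proof (induction n)
  case 0
  then show ?case by (simp add: ev_prim0 ev_zero)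
next
  case (Suc n)
  have "ev A TriH (prod_encode (n, prod_encode (triangle n, y))) (Suc n + triangle n)"
    unfolding TriH_def
    by (rule ev_comp[OF ev_pair[OF ev_comp[OF ev_fst' ev_succ] ev_comp[OF ev_snd' ev_fst']] ev_Add])
  from ev_primS[OF Suc this] show ?case by (simp add: add.commute)
qed

lemma ev_Tri: "ev A Tri x (triangle x)"
  unfolding Tri_def by (rule ev_comp[OF ev_pair[OF ev_ident ev_zero] ev_TriP])

definition PE :: recf where "PE = Comp Add (Pair (Comp Tri Add) Fst)"

lemma ev_PE: "ev A PE (prod_encode (a, b)) (prod_encode (a, b))"
  unfolding PE_def
  by (rule ev_cong[OF ev_comp[OF ev_pair[OF ev_comp[OF ev_Add ev_Tri] ev_fst'] ev_Add]])
     (simp add: prod_encode_def)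

definition PEc :: "recf \<Rightarrow> recf \<Rightarrow> recf" where "PEc f g = Comp PE (Pair f g)"

lemma ev_PEc: "ev A f x a \<Longrightarrow> ev A g x b \<Longrightarrow> ev A (PEc f g) x (prod_encode (a, b))"
  unfolding PEc_def by (rule ev_comp[OF ev_pair ev_PE])

definition T4 :: recf where "T4 = Comp (Comp Add (Pair Ident Ident)) (Comp Add (Pair Ident Ident))"

lemma ev_T4: "ev A T4 x (4 * x)"
  unfolding T4_def
  by (rule ev_cong[OF ev_comp[OF ev_comp[OF ev_pair[OF ev_ident ev_ident] ev_Add]
        ev_comp[OF ev_pair[OF ev_ident ev_ident] ev_Add]]]) simp

definition CodeC :: "nat \<Rightarrow> recf \<Rightarrow> recf \<Rightarrow> recf" where
  "CodeC k f g = addc k (Comp T4 (PEc f g))"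

lemma ev_CodeC: "ev A f x a \<Longrightarrow> ev A g x b \<Longrightarrow> ev A (CodeC k f g) x (k + 4 * prod_encode (a, b))"
  unfolding CodeC_def
  by (rule ev_cong[OF ev_addc[OF ev_comp[OF ev_PEc ev_T4]]]) auto

definition Pred :: recf where "Pred = Comp (Prim Zero Fst) (Pair Ident Zero)"

lemma ev_PredP: "ev A (Prim Zero Fst) (prod_encode (n, y)) (n - 1)"
proof (induction n)
  case 0 then show ?case by (simp add: ev_prim0 ev_zero)
next
  case (Suc n) from ev_primS[OF this ev_fst'] show ?case by simp
qed

lemma ev_Pred: "ev A Pred x (x - 1)"
  unfolding Pred_def by (rule ev_comp[OF ev_pair[OF ev_ident ev_zero] ev_PredP])

definition Sub :: recf where "Sub = Prim Ident (Comp Pred (Comp Fst Snd))"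

lemma ev_Sub: "ev A Sub (prod_encode (i, n)) (n - i)"
proof (induction i)
  case 0 then show ?case unfolding Sub_def by (simp add: ev_prim0 ev_ident)
next
  case (Suc i)
  have "ev A (Comp Pred (Comp Fst Snd)) (prod_encode (i, prod_encode (n - i, n))) (n - Suc i)"
    by (rule ev_cong[OF ev_comp[OF ev_comp[OF ev_snd' ev_fst'] ev_Pred]]) simp
  from ev_primS[OF Suc[unfolded Sub_def] this] show ?case unfolding Sub_def by simp
qed

definition sndd :: "nat \<Rightarrow> nat" where "sndd x = snd (prod_decode x)"

definition Extract :: recf where
  "Extract = Comp Fst (Prim Ident (Comp Snd (Comp Fst Snd)))"

lemma ev_ExtP: "ev A (Prim Ident (Comp Snd (Comp Fst Snd))) (prod_encode (d, v)) ((sndd ^^ d) v)"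
proof (induction d)
  case 0 then show ?case by (simp add: ev_prim0 ev_ident)
next
  case (Suc d)
  have "ev A (Comp Snd (Comp Fst Snd)) (prod_encode (d, prod_encode ((sndd ^^ d) v, v)))
     ((sndd ^^ Suc d) v)"
    by (rule ev_cong[OF ev_comp[OF ev_comp[OF ev_snd' ev_fst'] ev_snd]]) (simp add: sndd_def)
  from ev_primS[OF Suc this] show ?case by simp
qed

lemma ev_Extract: "ev A Extract (prod_encode (d, v)) (fst (prod_decode ((sndd ^^ d) v)))"
  unfolding Extract_def by (rule ev_comp[OF ev_ExtP ev_fst])


definition CCH :: recf where "CCH = CodeC 7 (K 1) (Comp Fst Snd)"
definition CC :: recf where "CC = Comp (Prim Zero CCH) (Pair Ident Zero)"

lemma ev_CCP: "ev A (Prim Zero CCH) (prod_encode (m, y)) (code (K m))"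
proof (induction m)
  case 0 then show ?case by (simp add: ev_prim0 ev_zero code_K_0)
next
  case (Suc m)
  have "ev A CCH (prod_encode (m, prod_encode (code (K m), y))) (code (K (Suc m)))"
    unfolding CCH_def code_K_Suc by (rule ev_CodeC[OF ev_K ev_comp[OF ev_snd' ev_fst']])
  from ev_primS[OF Suc this] show ?case .
qed

lemma ev_CC: "ev A CC m (code (K m))"
  unfolding CC_def by (rule ev_comp[OF ev_pair[OF ev_ident ev_zero] ev_CCP])

definition E :: "nat \<Rightarrow> nat \<Rightarrow> nat" where
  "E n k = 7 + 4 * prod_encode (code Extract, 6 + 4 * prod_encode (7 + 4 * prod_encode (code Sub,
      6 + 4 * prod_encode (code (K k), code (K n))), 7 + 4 * prod_encode (k, code (K n))))"

definition Eprog :: recf where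
  "Eprog = CodeC 7 (K (code Extract)) (CodeC 6 (CodeC 7 (K (code Sub))
      (CodeC 6 (Comp CC Fst) (Comp CC (Comp Snd Snd)))) (CodeC 7 Fst (Comp CC (Comp Snd Snd))))"

lemma ev_Eprog: "ev A Eprog (prod_encode (k, prod_encode (r, n))) (E n k)"
proof -
  have a: "ev A (Comp CC Fst) (prod_encode (k, prod_encode (r, n))) (code (K k))"
    by (rule ev_comp[OF ev_fst' ev_CC])
  have b: "ev A (Comp CC (Comp Snd Snd)) (prod_encode (k, prod_encode (r, n))) (code (K n))"
    by (rule ev_comp[OF ev_comp[OF ev_snd' ev_snd'] ev_CC])
  show ?thesis unfolding Eprog_def E_def
    by (intro ev_CodeC ev_K a b ev_fst')
qed

fun Rt :: "(nat \<Rightarrow> nat) \<Rightarrow> nat \<Rightarrow> nat \<Rightarrow> nat" where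
  "Rt F n 0 = 0"
| "Rt F n (Suc k) = prod_encode (F (E n k), Rt F n k)"

definition TupP :: "recf \<Rightarrow> recf" where
  "TupP Q = Prim Zero (Pair (Comp Q Eprog) (Comp Fst Snd))"
definition Tup :: "recf \<Rightarrow> recf" where
  "Tup Q = Comp (TupP Q) (Pair Succ Ident)"

lemma ev_TupP:
  assumes "\<And>x. ev A Q x (F x)"
  shows "ev A (TupP Q) (prod_encode (k, n)) (Rt F n k)"
proof (induction k)
  case 0 then show ?case unfolding TupP_def by (simp add: ev_prim0 ev_zero)
next
  case (Suc k)
  have "ev A (Pair (Comp Q Eprog) (Comp Fst Snd)) (prod_encode (k, prod_encode (Rt F n k, n)))
      (prod_encode (F (E n k), Rt F n k))"
    by (rule ev_pair[OF ev_comp[OF ev_Eprog assms] ev_comp[OF ev_snd' ev_fst']])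
  from ev_primS[OF Suc[unfolded TupP_def] this] show ?case unfolding TupP_def by simp
qed

lemma ev_Tup:
  assumes "\<And>x. ev A Q x (F x)"
  shows "ev A (Tup Q) n (Rt F n (Suc n))"
  unfolding Tup_def by (rule ev_comp[OF ev_pair[OF ev_succ ev_ident] ev_TupP[OF assms]])

lemma Rt_comp: "k < m \<Longrightarrow> fst (prod_decode ((sndd ^^ (m - Suc k)) (Rt F n m))) = F (E n k)"
proof (induction m)
  case 0 then show ?case by simp
next
  case (Suc m)
  show ?case
  proof (cases "k = m")
    case True then show ?thesis by simp
  next
    case False
    then have km: "k < m" using Suc.prems by simp
    then have "Suc m - Suc k = Suc (m - Suc k)" by simp
    then have "(sndd ^^ (Suc m - Suc k)) (Rt F n (Suc m)) = (sndd ^^ (m - Suc k)) (Rt F n m)"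
      by (simp only: funpow_Suc_right comp_def) (simp add: sndd_def)
    then show ?thesis using Suc.IH[OF km] by simp
  qed
qed

lemma triangle_mono: "a \<le> b \<Longrightarrow> triangle a \<le> triangle b"
proof (induction b rule: dec_induct)
  case base then show ?case by simp
next
  case (step n) then show ?case by simp
qed

lemma pe_mono: "a \<le> c \<Longrightarrow> b \<le> d \<Longrightarrow> prod_encode (a, b) \<le> prod_encode (c, d)"
  unfolding prod_encode_def using triangle_mono[of "a + b" "c + d"] by simp

lemma Rt_mono: "(\<And>x. F x \<le> G x) \<Longrightarrow> Rt F n k \<le> Rt G n k"
  by (induction k) (auto intro: pe_mono)

fun HSf :: "(nat \<Rightarrow> nat) \<Rightarrow> nat \<Rightarrow> nat" where
  "HSf G 0 = G 0 + 2"
| "HSf G (Suc n) = HSf G n + G (Suc n) + 1"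

definition HG :: "recf \<Rightarrow> recf" where "HG Q = addc 2 (Comp (Tup Q) Zero)"
definition HH :: "recf \<Rightarrow> recf" where
  "HH Q = addc 1 (Comp Add (Pair (Comp Fst Snd) (Comp (Tup Q) (Comp Succ Fst))))"
definition Hprog :: "recf \<Rightarrow> recf" where "Hprog Q = Comp (Prim (HG Q) (HH Q)) (Pair Ident Zero)"

lemma ev_HP:
  assumes "\<And>x. ev A Q x (F x)"
  shows "ev A (Prim (HG Q) (HH Q)) (prod_encode (n, y)) (HSf (\<lambda>m. Rt F m (Suc m)) n)"
proof (induction n)
  case 0
  have "ev A (HG Q) y (Rt F 0 (Suc 0) + 2)"
    unfolding HG_def by (rule ev_addc[OF ev_comp[OF ev_zero ev_Tup[OF assms]]])
  then show ?case by (simp add: ev_prim0)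
next
  case (Suc n)
  have "ev A (HH Q) (prod_encode (n, prod_encode (HSf (\<lambda>m. Rt F m (Suc m)) n, y)))
     (HSf (\<lambda>m. Rt F m (Suc m)) n + Rt F (Suc n) (Suc (Suc n)) + 1)"
    unfolding HH_def
    by (rule ev_addc[OF ev_comp[OF ev_pair[OF ev_comp[OF ev_snd' ev_fst']
          ev_comp[OF ev_comp[OF ev_fst' ev_succ] ev_Tup[OF assms]]] ev_Add]])
  from ev_primS[OF Suc this] show ?case by simp
qed

lemma ev_Hprog:
  assumes "\<And>x. ev A Q x (F x)"
  shows "ev A (Hprog Q) n (HSf (\<lambda>m. Rt F m (Suc m)) n)"
  unfolding Hprog_def by (rule ev_comp[OF ev_pair[OF ev_ident ev_zero] ev_HP[OF assms]])

lemma code_inj: "code p = code q \<Longrightarrow> p = q"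
proof (induction p arbitrary: q)
qed (case_tac q; simp; presburger?)+


lemma HSf_ge: "HSf G n \<ge> G n + n + 1"
  by (induction n) auto

definition D :: "recf \<Rightarrow> nat \<Rightarrow> nat \<Rightarrow> recf" where
  "D p j n = Comp Extract (Pair (Comp Sub (Pair (K j) (K n))) (Comp p (K n)))"

lemma code_D: "code (D p (code p) n) = E n (code p)"
  by (simp add: D_def E_def)

lemma ev_D: "ev A p n v \<Longrightarrow> ev A (D p j n) x (fst (prod_decode ((sndd ^^ (n - j)) v)))"
  unfolding D_def
  by (rule ev_comp[OF ev_pair[OF ev_comp[OF ev_pair[OF ev_K ev_K] ev_Sub] ev_comp[OF ev_K]] ev_Extract])

theorem mainTheorem2:
  assumes "order_function g"
  shows "\<exists>h. order_function h \<and>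
           (\<forall>f. DNR f \<and> bounded_by g f \<longrightarrow>
                (\<exists>s. SNPR s \<and> bounded_by h s \<and> turing_computes f s))"
proof -
  from assms obtain e where he: "\<And>x. phi e x (g x)"
    unfolding order_function_def recursive_def by blast
  from he[of 0] obtain pg where pg: "code pg = e" unfolding phi_def by blast
  have evg: "\<And>x. ev (\<lambda>_. 0) pg x (g x)"
  proof -
    fix x
    from he[of x] obtain p where "code p = e" "ev (\<lambda>_. 0) p x (g x)" unfolding phi_def by blast
    moreover have "p = pg" using code_inj pg \<open>code p = e\<close> by metis
    ultimately show "ev (\<lambda>_. 0) pg x (g x)" by simp
  qed
  define h where "h = HSf (\<lambda>m. Rt g m (Suc m))"
  have oh: "order_function h"
    unfolding order_function_def
  proof (intro conjI)
    show "recursive h" unfolding recursive_def phi_def h_def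
      using ev_Hprog[OF evg] by blast
    show "mono h" unfolding mono_iff_le_Suc h_def by simp
    show "\<forall>m. \<exists>n. m < h n"
    proof
      fix m
      have "h m \<ge> Rt g m (Suc m) + m + 1" unfolding h_def by (rule HSf_ge)
      then have "m < h m" by simp
      then show "\<exists>n. m < h n" by blast
    qed
    show "2 \<le> h 0" unfolding h_def by simp
  qed
  have main: "\<exists>s. SNPR s \<and> bounded_by h s \<and> turing_computes f s"
    if dnr: "DNR f" and bd: "bounded_by g f" for f
  proof -
    define s where "s = (\<lambda>n. Rt f n (Suc n))"
    have tc: "turing_computes f s" unfolding turing_computes_def s_def
      using ev_Tup[OF ev_orc] by blast
    have bh: "bounded_by h s" unfolding bounded_by_def
    proof
      fix n
      have "s n \<le> Rt g n (Suc n)" unfolding s_def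
        by (rule Rt_mono) (use bd in \<open>auto simp: bounded_by_def less_imp_le\<close>)
      also have "\<dots> < h n" unfolding h_def using HSf_ge[of "\<lambda>m. Rt g m (Suc m)" n] by simp
      finally show "s n < h n" .
    qed
    have sn: "SNPR s" unfolding SNPR_def
    proof (intro allI impI)
      fix \<psi> :: "nat \<Rightarrow> nat option"
      assume "partial_recursive \<psi>"
      then obtain j where hj: "\<And>x y. \<psi> x = Some y \<longleftrightarrow> phi j x y"
        unfolding partial_recursive_def by blast
      have "{n. \<psi> n = Some (s n)} \<subseteq> {..<j}"
      proof
        fix n assume "n \<in> {n. \<psi> n = Some (s n)}"
        then have "phi j n (s n)" using hj by simp
        then obtain p where cp: "code p = j" and ep: "ev (\<lambda>_. 0) p n (s n)"
          unfolding phi_def by blast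
        show "n \<in> {..<j}"
        proof (rule ccontr)
          assume "n \<notin> {..<j}"
          then have jn: "j < Suc n" by simp
          have "fst (prod_decode ((sndd ^^ (n - j)) (s n))) = f (E n j)"
            using Rt_comp[OF jn, of f n] unfolding s_def by simp
          then have "ev (\<lambda>_. 0) (D p j n) (E n j) (f (E n j))"
            using ev_D[OF ep, of j "E n j"] by simp
          then have "phi (E n j) (E n j) (f (E n j))"
            unfolding phi_def using code_D[of p n] cp by blast
          then show False using dnr unfolding DNR_def by blast
        qed
      qed
      then show "finite {n. \<psi> n = Some (s n)}" using finite_subset by blast
    qed
    show ?thesis using tc bh sn by blast
  qed
  show ?thesis using oh main by blast
qed

end
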